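(* Let $n,k\ge 1$ be integers, let $z_1,\dots,z_n$ be indeterminates, and let $\lambda=(\lambda_1,\dots,\lambda_k)$ be integers with $0\le\lambda_1\le\lambda_2\le\dots\le\lambda_k$. Then \[ \det(H(\lambda;n))=\sum_{b\in C(k,n)} S(z(b);\lambda)\,D(z(b))^2 . \]
   Context: $p_m=\sum_{i=1}^n z_i^m$ for $m\ge0$. $H(\lambda;n)$ is the $k\times k$ matrix with entries $H(\lambda;n)_{i,j}=p_{\lambda_i+j-1}$. For indeterminates $x_1,\dots,x_k$, $V(x_1,\dots,x_k;\lambda)$ is the $k\times k$ matrix with entries $x_j^{\lambda_i}$ (row $i$, column $j$), $D(x_1,\dots,x_k)=\prod_{1\le i<j\le k}(x_j-x_i)$ (with $D(x_1)=1$), and $S(x_1,\dots,x_k;\lambda)=\det V(x_1,\dots,x_k;\lambda)/D(x_1,\dots,x_k)$ (a polynomial). $C(k,n)$ is the set of $k$-element subsets $b=\{b_1<\dots<b_k\}$ of $\{1,\dots,n\}$, and $z(b)=(z_{b_1},\dots,z_{b_k})$. *)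

theory Defs
  imports "Jordan_Normal_Form.Determinant"
begin

definition psum :: "nat \<Rightarrow> (nat \<Rightarrow> 'a::comm_ring_1) \<Rightarrow> nat \<Rightarrow> 'a" where
  "psum n z m = (\<Sum>i=1..n. z i ^ m)"

(* H(lambda;n): k x k matrix, entry (i,j) (1-based) = p_{lambda_i + j - 1};
   here 0-based indices i,j < k, lambda is 1-based *)
definition Hmat :: "nat \<Rightarrow> (nat \<Rightarrow> nat) \<Rightarrow> nat \<Rightarrow> (nat \<Rightarrow> 'a::comm_ring_1) \<Rightarrow> 'a mat" where
  "Hmat k lam n z = mat k k (\<lambda>(i,j). psum n z (lam (i+1) + j))"

definition Vmat :: "'a::comm_ring_1 list \<Rightarrow> (nat \<Rightarrow> nat) \<Rightarrow> 'a mat" where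
  "Vmat xs lam = mat (length xs) (length xs) (\<lambda>(i,j). (xs ! j) ^ lam (i+1))"

definition Dprod :: "'a::comm_ring_1 list \<Rightarrow> 'a" where
  "Dprod xs = (\<Prod>(i,j)\<in>{(i,j). i < j \<and> j < length xs}. xs ! j - xs ! i)"

definition Sfun :: "'a::field list \<Rightarrow> (nat \<Rightarrow> nat) \<Rightarrow> 'a" where
  "Sfun xs lam = det (Vmat xs lam) / Dprod xs"

definition Csets :: "nat \<Rightarrow> nat \<Rightarrow> nat set set" where
  "Csets k n = {b. b \<subseteq> {1..n} \<and> card b = k}"

definition zsub :: "(nat \<Rightarrow> 'a) \<Rightarrow> nat set \<Rightarrow> 'a list" where
  "zsub z b = map z (sorted_list_of_set b)"

end

theory Submission
  imports Defs
begin

lemma det_rows_scale: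
  fixes a :: "nat \<Rightarrow> nat \<Rightarrow> 'a::comm_ring_1"
  shows "det (mat k k (\<lambda>(i,j). c i * a i j)) = prod c {0..<k} * det (mat k k (\<lambda>(i,j). a i j))"
proof -
  have "det (mat k k (\<lambda>(i,j). c i * a i j)) =
     (\<Sum>p\<in>{p. p permutes {0..<k}}. signof p * (\<Prod>i = 0..<k. c i * a i (p i)))"
    by (subst det_def'[of _ k]) (auto intro!: sum.cong prod.cong simp: permutes_in_image)
  also have "\<dots> = (\<Sum>p\<in>{p. p permutes {0..<k}}. prod c {0..<k} * (signof p * (\<Prod>i = 0..<k. a i (p i))))"
    by (simp add: prod.distrib ac_simps)
  also have "\<dots> = prod c {0..<k} * det (mat k k (\<lambda>(i,j). a i j))"
    by (subst det_def'[of _ k]) (auto simp: sum_distrib_left intro!: sum.cong prod.cong arg_cong2[where f="(*)"] simp: permutes_in_image)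
  finally show ?thesis .
qed

lemma vandermonde:
  fixes x :: "nat \<Rightarrow> 'a::comm_ring_1"
  shows "det (mat k k (\<lambda>(i,j). x i ^ j)) = (\<Prod>(i,j)\<in>{(i,j). i < j \<and> j < k}. x j - x i)"
proof (induction k arbitrary: x)
  case 0
  then show ?case by simp
next
  case (Suc k)
  define M where "M = mat (Suc k) (Suc k) (\<lambda>(i,j). x i ^ j)"
  define U where "U = mat (Suc k) (Suc k) (\<lambda>(i,j). if i = j then 1 else if j = Suc i then - x 0 else (0::'a))"
  have M: "M \<in> carrier_mat (Suc k) (Suc k)" and U: "U \<in> carrier_mat (Suc k) (Suc k)"
    by (auto simp: M_def U_def)
  have "upper_triangular U" by (auto simp: U_def)
  then have dU: "det U = 1"
  proof -
    have "diag_mat U = map (\<lambda>_. 1) [0..<Suc k]"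
      by (auto simp: diag_mat_def U_def)
    then show ?thesis using \<open>upper_triangular U\<close>
      by (subst det_upper_triangular[OF _ U]) (auto simp: map_replicate_const)
  qed
  define M' where "M' = M * U"
  have M': "M' \<in> carrier_mat (Suc k) (Suc k)" using M U by (auto simp: M'_def)
  have ent: "M' $$ (i,j) = (if j = 0 then 1 else x i ^ j - x 0 * x i ^ (j - 1))" if "i < Suc k" "j < Suc k" for i j
  proof -
    have "M' $$ (i,j) = (\<Sum>l<Suc k. x i ^ l * U $$ (l, j))"
      using that M U by (simp add: M'_def M_def scalar_prod_def atLeast0LessThan row_def col_def)
    also have "\<dots> = (\<Sum>l<Suc k. (if l = j then x i ^ l else 0) + (if Suc l = j then - x 0 * x i ^ l else 0))"
      using that by (intro sum.cong) (auto simp: U_def)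
    also have "\<dots> = (if j = 0 then 1 else x i ^ j - x 0 * x i ^ (j - 1))"
      using that by (cases j) (auto simp: sum.distrib sum.delta')
    finally show ?thesis .
  qed
  have "det M = det M'" using dU by (simp add: M'_def det_mult[OF M U])
  also have "\<dots> = (\<Sum>j<Suc k. M' $$ (0, j) * cofactor M' 0 j)"
    by (rule laplace_expansion_row[OF M']) simp
  also have "\<dots> = cofactor M' 0 0"
    by (subst sum.lessThan_Suc_shift) (auto simp: ent intro!: sum.neutral)
  also have "\<dots> = det (mat k k (\<lambda>(i,j). (x (Suc i) - x 0) * x (Suc i) ^ j))"
    unfolding cofactor_def mat_delete_def using M'
    by (auto intro!: arg_cong[where f=det] eq_matI simp: ent algebra_simps)
  also have "\<dots> = (\<Prod>i=0..<k. x (Suc i) - x 0) * (\<Prod>(i,j)\<in>{(i,j). i < j \<and> j < k}. x (Suc j) - x (Suc i))"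
    by (subst det_rows_scale) (simp add: Suc.IH)
  also have "\<dots> = (\<Prod>(i,j)\<in>{(i,j). i < j \<and> j < Suc k}. x j - x i)"
  proof -
    let ?A = "(\<lambda>i. (0::nat, Suc i)) ` {0..<k}"
    let ?B = "(\<lambda>(i,j). (Suc i, Suc j)) ` {(i,j). i < j \<and> j < k}"
    have fin: "finite {(i,j). i < j \<and> j < (k::nat)}"
      by (rule finite_subset[of _ "{0..<k} \<times> {0..<k}"]) auto
    have split: "{(i,j). i < j \<and> j < Suc k} = ?A \<union> ?B"
    proof
      show "{(i,j). i < j \<and> j < Suc k} \<subseteq> ?A \<union> ?B"
      proof
        fix p assume "p \<in> {(i,j). i < j \<and> j < Suc k}"
        then obtain i j where p: "p = (i,j)" "i < j" "j < Suc k" by auto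
        show "p \<in> ?A \<union> ?B"
        proof (cases i)
          case 0 then show ?thesis using p by (cases j) auto
        next
          case (Suc i') then show ?thesis using p
            by (cases j) (auto intro!: image_eqI[where x="(i', j - 1)"])
        qed
      qed
    qed auto
    have "(\<Prod>(i,j)\<in>?A \<union> ?B. x j - x i) = (\<Prod>(i,j)\<in>?A. x j - x i) * (\<Prod>(i,j)\<in>?B. x j - x i)"
      by (rule prod.union_disjoint) (use fin in auto)
    also have "(\<Prod>(i,j)\<in>?A. x j - x i) = (\<Prod>i=0..<k. x (Suc i) - x 0)"
      by (subst prod.reindex) (auto simp: inj_on_def)
    also have "(\<Prod>(i,j)\<in>?B. x j - x i) = (\<Prod>(i,j)\<in>{(i,j). i < j \<and> j < k}. x (Suc j) - x (Suc i))"
      by (subst prod.reindex) (auto simp: inj_on_def case_prod_beta)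
    finally show ?thesis using split by simp
  qed
  finally show ?case by (simp add: M_def)
qed

lemma nth_inj: "distinct xs \<Longrightarrow> inj_on (nth xs) {0..<length xs}"
  by (auto simp: inj_on_def nth_eq_iff_index_eq)

lemma nth_img: "(nth xs) ` {0..<length xs} = set xs"
  by (auto simp: in_set_conv_nth)

lemma main_formula:
  fixes z :: "nat \<Rightarrow> 'a::comm_ring_1"
  shows "det (Hmat k lam n z) = (\<Sum>b\<in>Csets k n. det (Vmat (zsub z b) lam) * Dprod (zsub z b))"
proof -
  define K where "K = {0..<k}"
  define P where "P = {p. p permutes K}"
  define Fs where "Fs = PiE K (\<lambda>_. {1..n})"
  define Fi where "Fi = {f\<in>Fs. inj_on f K}"
  define A where "A f = (\<Prod>i\<in>K. z (f i) ^ lam (Suc i))" for f :: "nat \<Rightarrow> nat"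
  define W where "W f = det (mat k k (\<lambda>(i,j). z (f i) ^ j))" for f :: "nat \<Rightarrow> nat"
  define s where "s b = sorted_list_of_set b" for b :: "nat set"
  define \<phi> where "\<phi> bp = restrict (\<lambda>i. s (fst bp) ! snd bp i) K" for bp :: "nat set \<times> (nat \<Rightarrow> nat)"
  define \<psi> where "\<psi> f = (f ` K, \<lambda>i. if i \<in> K then the_inv_into K (nth (s (f ` K))) (f i) else i)" for f :: "nat \<Rightarrow> nat"
  have finFs: "finite Fs" by (simp add: Fs_def finite_PiE K_def)
  have finP: "finite P" unfolding P_def K_def by (rule finite_permutations) simp
  have finC: "finite (Csets k n)"
    by (rule finite_subset[of _ "Pow {1..n}"]) (auto simp: Csets_def)
  have sC: "length (s b) = k" "distinct (s b)" "set (s b) = b" "b \<subseteq> {1..n}" if "b \<in> Csets k n" for b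
  proof -
    have "b \<subseteq> {1..n}" "card b = k" using that by (auto simp: Csets_def)
    moreover have "finite b" using finite_subset[OF \<open>b \<subseteq> {1..n}\<close>] by simp
    ultimately show "length (s b) = k" "distinct (s b)" "set (s b) = b" "b \<subseteq> {1..n}"
      by (auto simp: s_def)
  qed
  have s1: "det (Hmat k lam n z) = (\<Sum>p\<in>P. signof p * (\<Prod>i\<in>K. \<Sum>l\<in>{1..n}. z l ^ (lam (Suc i) + p i)))"
    by (subst det_def'[of _ k]) (auto simp: Hmat_def psum_def P_def K_def permutes_in_image intro!: sum.cong prod.cong)
  also have "\<dots> = (\<Sum>p\<in>P. signof p * (\<Sum>f\<in>Fs. \<Prod>i\<in>K. z (f i) ^ (lam (Suc i) + p i)))"
    by (simp add: prod_sum_PiE Fs_def K_def)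
  also have "\<dots> = (\<Sum>f\<in>Fs. A f * W f)"
  proof -
    have "A f * W f = (\<Sum>p\<in>P. signof p * (\<Prod>i\<in>K. z (f i) ^ (lam (Suc i) + p i)))" for f
    proof -
      have "W f = (\<Sum>p\<in>P. signof p * (\<Prod>i\<in>K. z (f i) ^ p i))"
        unfolding W_def by (subst det_def'[of _ k]) (auto simp: P_def K_def permutes_in_image intro!: sum.cong prod.cong)
      then show ?thesis
        by (simp add: A_def sum_distrib_left power_add prod.distrib ac_simps)
    qed
    then show ?thesis by (simp add: sum_distrib_left sum.swap[of _ P])
  qed
  also have "\<dots> = (\<Sum>f\<in>Fi. A f * W f)"
  proof (rule sum.mono_neutral_right[OF finFs])
    show "Fi \<subseteq> Fs" by (auto simp: Fi_def)
    show "\<forall>f\<in>Fs - Fi. A f * W f = 0"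
    proof
      fix f assume "f \<in> Fs - Fi"
      then obtain i j where ij: "i \<in> K" "j \<in> K" "i \<noteq> j" "f i = f j"
        by (auto simp: Fi_def inj_on_def)
      have "W f = 0" unfolding W_def
        by (rule det_identical_rows[where n=k and i=i and j=j]) (use ij in \<open>auto simp: K_def row_def\<close>)
      then show "A f * W f = 0" by simp
    qed
  qed
  also have "\<dots> = (\<Sum>bp\<in>Csets k n \<times> P. A (\<phi> bp) * W (\<phi> bp))"
  proof (rule sum.reindex_bij_witness[where i=\<psi> and j=\<phi>, symmetric])
    fix bp assume "bp \<in> Csets k n \<times> P"
    then obtain b p where bp: "bp = (b,p)" "b \<in> Csets k n" "p permutes K" by (auto simp: P_def)
    note sb = sC[OF bp(2)]
    have pK: "p i \<in> K" if "i \<in> K" for i using bp(3) that by (simp add: permutes_in_image)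
    have img: "\<phi> bp ` K = b"
    proof -
      have "\<phi> bp ` K = (nth (s b)) ` (p ` K)" by (auto simp: \<phi>_def bp image_image)
      also have "\<dots> = b" using sb nth_img[of "s b"] permutes_image[OF bp(3)] by (simp add: K_def)
      finally show ?thesis .
    qed
    show "\<psi> (\<phi> bp) = bp"
      unfolding \<psi>_def img using bp sb pK
      by (auto simp: \<phi>_def K_def the_inv_into_f_f[OF nth_inj] permutes_not_in fun_eq_iff)
    show "\<phi> bp \<in> Fi"
    proof -
      have "inj_on (\<lambda>i. s b ! p i) K"
      proof (rule inj_onI)
        fix x y assume xy: "x \<in> K" "y \<in> K" "s b ! p x = s b ! p y"
        then have "p x = p y" using pK[OF xy(1)] pK[OF xy(2)] sb
          by (simp add: nth_eq_iff_index_eq K_def)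
        then show "x = y" using permutes_inj_on[OF bp(3)] xy by (auto dest: inj_onD)
      qed
      then have "inj_on (\<phi> bp) K"
        using inj_on_cong[of K "\<phi> bp" "\<lambda>i. s b ! p i"] by (simp add: \<phi>_def bp)
      moreover have "\<phi> bp \<in> Fs"
        unfolding Fs_def \<phi>_def bp using sb pK
        by (auto simp: restrict_PiE_iff K_def)
      ultimately show ?thesis by (simp add: Fi_def)
    qed
  next
    fix f assume f: "f \<in> Fi"
    define b where "b = f ` K"
    have inj: "inj_on f K" and fr: "f ` K \<subseteq> {1..n}" and fo: "\<And>i. i \<notin> K \<Longrightarrow> f i = undefined"
      using f by (auto simp: Fi_def Fs_def PiE_def extensional_def)
    have bC: "b \<in> Csets k n" using inj fr by (auto simp: Csets_def b_def card_image K_def)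
    note sb = sC[OF bC]
    define p where "p i = (if i \<in> K then the_inv_into K (nth (s b)) (f i) else i)" for i
    have K': "K = {0..<length (s b)}" using sb by (simp add: K_def)
    have fin: "f i \<in> (nth (s b)) ` K" if "i \<in> K" for i
    proof -
      have "f i \<in> b" using that by (simp add: b_def)
      then show ?thesis using sb nth_img[of "s b"] by (simp add: K')
    qed
    have pK: "p i \<in> K" and sp: "s b ! p i = f i" if "i \<in> K" for i
      using that fin the_inv_into_into[OF nth_inj[OF sb(2)], of "f i" K] f_the_inv_into_f[OF nth_inj[OF sb(2)]]
      by (auto simp: p_def K'[symmetric])
    have pp: "p permutes K"
    proof (rule inj_on_nat_permutes)
      show "inj_on p K"
      proof (rule inj_onI)
        fix i j assume "i \<in> K" "j \<in> K" "p i = p j"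
        then have "f i = f j" using sp by metis
        then show "i = j" using inj \<open>i \<in> K\<close> \<open>j \<in> K\<close> by (auto dest: inj_onD)
      qed
    qed (use pK in \<open>auto simp: p_def K_def\<close>)
    have psi: "\<psi> f = (b, p)"
      unfolding \<psi>_def b_def[symmetric] by (simp add: p_def fun_eq_iff)
    have phb: "\<phi> (b, p) = f"
      using sp fo by (auto simp: \<phi>_def fun_eq_iff)
    show "\<psi> f \<in> Csets k n \<times> P" "\<phi> (\<psi> f) = f" using psi phb bC pp by (auto simp: P_def)
  qed simp
  also have "\<dots> = (\<Sum>b\<in>Csets k n. \<Sum>p\<in>P. A (\<phi> (b,p)) * W (\<phi> (b,p)))"
    by (simp add: sum.cartesian_product)
  also have "\<dots> = (\<Sum>b\<in>Csets k n. det (Vmat (zsub z b) lam) * Dprod (zsub z b))"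
  proof (rule sum.cong[OF refl])
    fix b assume bC: "b \<in> Csets k n"
    note sb = sC[OF bC]
    have lz: "length (zsub z b) = k" using sb by (simp add: zsub_def s_def[symmetric])
    have zn: "zsub z b ! i = z (s b ! i)" if "i < k" for i using that sb by (simp add: zsub_def s_def[symmetric])
    define M where "M = mat k k (\<lambda>(i,j). z (s b ! i) ^ j)"
    have DM: "det M = Dprod (zsub z b)"
      unfolding M_def Dprod_def vandermonde lz using zn by (auto intro!: prod.cong)
    have Wq: "W (\<phi> (b,p)) = signof p * Dprod (zsub z b)" if "p \<in> P" for p
    proof -
      have p: "p permutes {0..<k}" using that by (simp add: P_def K_def)
      have "W (\<phi> (b,p)) = det (mat k k (\<lambda>(i,j). M $$ (p i, j)))"
        unfolding W_def
      proof (rule arg_cong[where f=det], rule eq_matI)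
        fix i j assume ij: "i < dim_row (mat k k (\<lambda>(i,j). M $$ (p i, j)))" "j < dim_col (mat k k (\<lambda>(i,j). M $$ (p i, j)))"
        then have "i < k" "j < k" by auto
        moreover have "p i < k" using \<open>i < k\<close> permutes_in_image[OF p] by simp
        ultimately show "mat k k (\<lambda>(i,j). z (\<phi> (b,p) i) ^ j) $$ (i, j) = mat k k (\<lambda>(i,j). M $$ (p i, j)) $$ (i, j)"
          by (simp add: \<phi>_def K_def M_def)
      qed auto
      also have "\<dots> = signof p * det M"
        by (rule det_permute_rows[OF _ p]) (simp add: M_def)
      finally show ?thesis using DM by simp
    qed
    have Aeq: "A (\<phi> (b,p)) = (\<Prod>i\<in>K. z (s b ! p i) ^ lam (Suc i))" for p
      unfolding A_def \<phi>_def by (rule prod.cong) auto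
    have "(\<Sum>p\<in>P. A (\<phi> (b,p)) * W (\<phi> (b,p))) = (\<Sum>p\<in>P. signof p * (\<Prod>i\<in>K. z (s b ! p i) ^ lam (Suc i)) * Dprod (zsub z b))"
      by (rule sum.cong[OF refl]) (simp only: Aeq Wq mult_ac)
    also have "\<dots> = (\<Sum>p\<in>P. signof p * (\<Prod>i\<in>K. z (s b ! p i) ^ lam (Suc i))) * Dprod (zsub z b)"
      by (simp only: sum_distrib_right)
    also have "(\<Sum>p\<in>P. signof p * (\<Prod>i\<in>K. z (s b ! p i) ^ lam (Suc i))) = det (Vmat (zsub z b) lam)"
    proof -
      have V: "Vmat (zsub z b) lam \<in> carrier_mat k k" by (simp add: Vmat_def lz)
      have "Vmat (zsub z b) lam $$ (i, p i) = z (s b ! p i) ^ lam (Suc i)" if "p \<in> P" "i \<in> K" for p i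
      proof -
        have "p i < k" using that by (auto simp: P_def K_def permutes_in_image)
        then show ?thesis using that lz zn[of "p i"] by (simp add: Vmat_def K_def)
      qed
      then show ?thesis unfolding det_def'[OF V]
        by (intro sum.cong refl arg_cong2[where f="(*)"] prod.cong) (auto simp: P_def K_def)
    qed
    finally show "(\<Sum>p\<in>P. A (\<phi> (b,p)) * W (\<phi> (b,p))) = det (Vmat (zsub z b) lam) * Dprod (zsub z b)" .
  qed
  finally show ?thesis .
qed

theorem theorem2p6:
  fixes n k :: nat and z :: "nat \<Rightarrow> 'a::field_char_0" and lam :: "nat \<Rightarrow> nat"
  assumes "n \<ge> 1" and "k \<ge> 1"
    and "\<And>i j. 1 \<le> i \<Longrightarrow> i \<le> j \<Longrightarrow> j \<le> k \<Longrightarrow> lam i \<le> lam j"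
    and "inj_on z {1..n}"
  shows "det (Hmat k lam n z) = (\<Sum>b\<in>Csets k n. Sfun (zsub z b) lam * (Dprod (zsub z b))^2)"
  unfolding main_formula
  by (intro sum.cong refl) (auto simp: Sfun_def power2_eq_square)

end
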